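(* For every $n>2$ and every $c\geq1$, $$\rho_{n,(1,1,c)}=\frac{n-2}{n}\cdot\frac{1}{1-(2/n)^c}.$$
   Context: Let $X$ be a finite alphabet with $n\geq 2$ letters and $X^*$ the set of words over $X$; $|v|$ is the length of a word $v$. A code over $X$ is a finite sequence $C=(v_1,\ldots,v_m)$ of words over $X$ such that every $w\in X^*$ has at most one factorization into code-words: if $w=v_{i_1}\cdots v_{i_l}=v_{j_1}\cdots v_{j_{l'}}$ with $l,l'\geq1$, then $l=l'$ and $i_t=j_t$ for all $t$. (Codes are sequences, not sets.) A code $C=(v_1,\ldots,v_m)$ is a prefix code if for all $i,j$, $v_i$ is a prefix of $v_j$ if and only if $i=j$. For a finite sequence $L=(a_1,\ldots,a_m)$ of positive integers, $UD_n(L)$ is the set of all codes $(v_1,\ldots,v_m)$ over an $n$-letter alphabet with $|v_i|=a_i$ for all $i$, $PR_n(L)\subseteq UD_n(L)$ is the subset of prefix codes, and $\rho_{n,L}=|PR_n(L)|/|UD_n(L)|$. *)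

theory Defs
  imports Complex_Main "HOL-Library.Sublist"
begin

text \<open>Alphabet with n letters: {0..<n}. Words: lists over it. A code is a list of words
 (a sequence, not a set).\<close>

definition words :: "nat \<Rightarrow> nat list set" where
  "words n = {w. set w \<subseteq> {0..<n}}"

definition is_code :: "nat list list \<Rightarrow> bool" where
  "is_code C \<longleftrightarrow>
     (\<forall>is js. is \<noteq> [] \<longrightarrow> js \<noteq> [] \<longrightarrow> set is \<subseteq> {0..<length C} \<longrightarrow> set js \<subseteq> {0..<length C} \<longrightarrow>
        concat (map (\<lambda>i. C ! i) is) = concat (map (\<lambda>j. C ! j) js) \<longrightarrow> is = js)"

definition is_prefix_code :: "nat list list \<Rightarrow> bool" where
  "is_prefix_code C \<longleftrightarrow>
     (\<forall>i<length C. \<forall>j<length C. prefix (C ! i) (C ! j) \<longleftrightarrow> i = j)"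

definition UD :: "nat \<Rightarrow> nat list \<Rightarrow> nat list list set" where
  "UD n L = {C. length C = length L \<and> (\<forall>i<length L. C ! i \<in> words n \<and> length (C ! i) = L ! i)
               \<and> is_code C}"

definition PR :: "nat \<Rightarrow> nat list \<Rightarrow> nat list list set" where
  "PR n L = {C \<in> UD n L. is_prefix_code C}"

definition rho :: "nat \<Rightarrow> nat list \<Rightarrow> real" where
  "rho n L = real (card (PR n L)) / real (card (UD n L))"

end

theory Submission
  imports Defs
begin


lemma L:
  assumes "set ks \<subseteq> {0..<3}" "concat (map ((!) [[a],[b],w]) ks) = u @ x # v"
    "set u \<subseteq> {a,b}" "x \<notin> {a,b}"
  shows "length (takeWhile (\<lambda>y. y \<in> {a,b}) w) \<le> length u"
  using assms
proof (induction ks arbitrary: u)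
  case Nil
  then show ?case by simp
next
  case (Cons k ks)
  have k: "k = 0 \<or> k = 1 \<or> k = 2" using Cons.prems(1) by auto
  show ?case
  proof (cases "k = 2")
    case True
    hence eq: "w @ concat (map ((!) [[a],[b],w]) ks) = u @ x # v" using Cons.prems(2) by simp
    have tu: "takeWhile (\<lambda>y. y \<in> {a,b}) (u @ x # v) = u"
      using Cons.prems(3,4) by (subst takeWhile_append2) auto
    show ?thesis
    proof (cases "\<forall>y\<in>set w. y \<in> {a,b}")
      case True
      hence "takeWhile (\<lambda>y. y \<in> {a,b}) (w @ concat (map ((!) [[a],[b],w]) ks))
          = w @ takeWhile (\<lambda>y. y \<in> {a,b}) (concat (map ((!) [[a],[b],w]) ks))"
        by (subst takeWhile_append2) auto
      hence "length w \<le> length u" using eq tu by (metis le_add1 length_append)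
      then show ?thesis by (meson length_takeWhile_le order.trans)
    next
      case False
      then obtain y where "y \<in> set w" "y \<notin> {a,b}" by blast
      hence "takeWhile (\<lambda>y. y \<in> {a,b}) (w @ concat (map ((!) [[a],[b],w]) ks))
          = takeWhile (\<lambda>y. y \<in> {a,b}) w"
        by (subst takeWhile_append1) auto
      then show ?thesis using eq tu by simp
    qed
  next
    case False
    then obtain l where l: "l \<in> {a,b}" "[[a],[b],w] ! k = [l]" using k by auto
    have eq: "l # concat (map ((!) [[a],[b],w]) ks) = u @ x # v"
      using Cons.prems(2) l False k by auto
    have "u \<noteq> []" using eq l Cons.prems(4) by auto
    then obtain u' where u: "u = l # u'" using eq by (cases u) auto
    have "length (takeWhile (\<lambda>y. y \<in> {a,b}) w) \<le> length u'"
      using Cons.IH[of u'] Cons.prems u eq by auto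
    then show ?thesis using u by simp
  qed
qed

lemma M:
  assumes "l \<in> {a,b}" "w @ R1 = l # concat (map ((!) [[a],[b],w]) ks)"
    "set ks \<subseteq> {0..<3}" "\<not> set w \<subseteq> {a,b}"
  shows False
proof -
  let ?P = "\<lambda>y. y \<in> {a,b}"
  define t where "t = takeWhile ?P w"
  define d where "d = dropWhile ?P w"
  have "d \<noteq> []" using assms(4) unfolding d_def by (auto simp: dropWhile_eq_Nil_conv)
  then obtain z d' where d: "d = z # d'" by (cases d) auto
  have "\<not> ?P (hd d)" using \<open>d \<noteq> []\<close> unfolding d_def by (rule hd_dropWhile)
  hence z: "\<not> ?P z" using d by simp
  have w: "w = t @ z # d'" using d unfolding t_def d_def by (metis takeWhile_dropWhile_id)
  have st: "set t \<subseteq> {a,b}" unfolding t_def by (auto dest: set_takeWhileD)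
  have eq: "t @ z # (d' @ R1) = l # concat (map ((!) [[a],[b],w]) ks)" using assms(2) w by simp
  have "t \<noteq> []" using eq z assms(1) by (cases t) auto
  then obtain t' where t: "t = l # t'" using eq by (cases t) auto
  have "concat (map ((!) [[a],[b],w]) ks) = t' @ z # (d' @ R1)" using eq t by simp
  moreover have "set t' \<subseteq> {a,b}" using st t by auto
  ultimately have "length (takeWhile ?P w) \<le> length t'" using L[OF assms(3)] z by simp
  thus False using t t_def by simp
qed

lemma code_ok:
  assumes "a \<noteq> b" "\<not> set w \<subseteq> {a,b}"
  shows "is_code [[a],[b],w]"
proof -
  let ?C = "[[a],[b],w]"
  have wne: "w \<noteq> []" using assms(2) by auto
  have ne: "\<And>k. k < 3 \<Longrightarrow> ?C ! k \<noteq> []" using wne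
    by (auto simp: less_Suc_eq numeral_3_eq_3)
  have key: "\<forall>js. set xs \<subseteq> {0..<3} \<longrightarrow> set js \<subseteq> {0..<3} \<longrightarrow>
      concat (map ((!) ?C) xs) = concat (map ((!) ?C) js) \<longrightarrow> xs = js" for xs
  proof (induction xs)
    case Nil
    show ?case
    proof (intro allI impI)
      fix js :: "nat list"
      assume "set js \<subseteq> {0..<3}" "concat (map ((!) ?C) []) = concat (map ((!) ?C) js)"
      thus "[] = js" using ne by (cases js) auto
    qed
  next
    case (Cons i xs)
    show ?case
    proof (intro allI impI)
      fix js :: "nat list"
      assume A: "set (i # xs) \<subseteq> {0..<3}" "set js \<subseteq> {0..<3}"
        "concat (map ((!) ?C) (i # xs)) = concat (map ((!) ?C) js)"
      show "i # xs = js"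
      proof (cases js)
        case Nil
        then show ?thesis using A ne by auto
      next
        case (Cons j js')
        have i: "i = 0 \<or> i = 1 \<or> i = 2" and j: "j = 0 \<or> j = 1 \<or> j = 2"
          using A Cons by auto
        have eq: "?C ! i @ concat (map ((!) ?C) xs) = ?C ! j @ concat (map ((!) ?C) js')"
          using A(3) Cons by simp
        show ?thesis
        proof (cases "i = j")
          case True
          hence "xs = js'" using Cons.IH A Cons eq by simp
          then show ?thesis using Cons True by simp
        next
          case False
          have ks1: "set xs \<subseteq> {0..<3}" and ks2: "set js' \<subseteq> {0..<3}" using A Cons by auto
          show ?thesis
          proof (cases "i = 2")
            case True
            then obtain l where "l \<in> {a,b}" "?C ! j = [l]" using j False by auto
            then show ?thesis using M[OF _ _ ks2 assms(2)] eq True by auto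
          next
            case F2: False
            show ?thesis
            proof (cases "j = 2")
              case True
              then obtain l where "l \<in> {a,b}" "?C ! i = [l]" using i F2 by auto
              then show ?thesis using M[OF _ _ ks1 assms(2)] eq[symmetric] True by auto
            next
              case False
              then show ?thesis using eq i j F2 \<open>i \<noteq> j\<close> assms(1) by auto
            qed
          qed
        qed
      qed
    qed
  qed
  have l3: "length ?C = 3" by simp
  show ?thesis unfolding is_code_def l3 using key by blast
qed



lemma concat_letters:
  assumes "set w \<subseteq> {a,b}"
  shows "concat (map ((!) [[a],[b],v]) (map (\<lambda>y. if y = a then 0 else 1) w)) = w"
  using assms by (induction w) auto

lemma code_bad:
  assumes "is_code [[a],[b],w]" "w \<noteq> []"
  shows "a \<noteq> b \<and> \<not> set w \<subseteq> {a,b}"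
proof
  show "a \<noteq> b"
  proof
    assume "a = b"
    hence "concat (map ((!) [[a],[b],w]) [0]) = concat (map ((!) [[a],[b],w]) [1])" by simp
    hence "[0::nat] = [1]" using assms(1)[unfolded is_code_def, rule_format, of "[0]" "[1]"] by simp
    thus False by simp
  qed
next
  show "\<not> set w \<subseteq> {a,b}"
  proof
    assume s: "set w \<subseteq> {a,b}"
    define js where "js = map (\<lambda>y. if y = a then 0 else 1::nat) w"
    have "concat (map ((!) [[a],[b],w]) [2]) = concat (map ((!) [[a],[b],w]) js)"
      using concat_letters[OF s, of w] unfolding js_def by simp
    moreover have "js \<noteq> []" "set js \<subseteq> {0..<3}" using assms(2) unfolding js_def by auto
    ultimately have "[2] = js" using assms(1)[unfolded is_code_def, rule_format, of "[2]" js] by (simp add: numeral_3_eq_3)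
    moreover have "2 \<notin> set js" unfolding js_def by auto
    ultimately show False by (metis list.set_intros(1))
  qed
qed

lemma len3: "length C = 3 \<Longrightarrow> C = [C!0, C!1, C!2]"
  by (cases C; cases "tl C"; cases "tl (tl C)") (auto simp: numeral_3_eq_3)

lemma all3: "(\<forall>i<(3::nat). P i) \<longleftrightarrow> P 0 \<and> P 1 \<and> (P 2 :: bool)"
  by (auto simp: numeral_3_eq_3 numeral_2_eq_2 less_Suc_eq)

lemma all3s: "(\<forall>i<Suc (Suc (Suc 0)). P i) \<longleftrightarrow> P 0 \<and> P 1 \<and> (P 2 :: bool)"
  by (auto simp: numeral_3_eq_3 numeral_2_eq_2 less_Suc_eq)

lemma UD_char:
  assumes "c \<ge> 1"
  shows "C \<in> UD n [1,1,c] \<longleftrightarrow> (\<exists>a b w. C = [[a],[b],w] \<and> a<n \<and> b<n \<and> a\<noteq>b \<and>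
     set w \<subseteq> {0..<n} \<and> length w = c \<and> \<not> set w \<subseteq> {a,b})"
proof
  assume "C \<in> UD n [1,1,c]"
  hence l: "length C = 3" and el: "\<forall>i<3. C ! i \<in> words n \<and> length (C ! i) = [1,1,c] ! i"
    and cd: "is_code C" unfolding UD_def by auto
  from el have e0: "C!0 \<in> words n" "length (C!0) = 1" and e1: "C!1 \<in> words n" "length (C!1) = 1"
    and e2: "C!2 \<in> words n" "length (C!2) = c" unfolding all3 by auto
  from e0 obtain a where a: "C!0 = [a]" by (metis One_nat_def length_0_conv length_Suc_conv)
  from e1 obtain b where b: "C!1 = [b]" by (metis One_nat_def length_0_conv length_Suc_conv)
  have C: "C = [[a],[b],C!2]" using len3[OF l] a b by simp
  have "C!2 \<noteq> []" using e2 assms by auto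
  hence "a \<noteq> b \<and> \<not> set (C!2) \<subseteq> {a,b}" using code_bad cd C by metis
  moreover have "a < n" "b < n" "set (C!2) \<subseteq> {0..<n}" using e0 e1 e2 a b unfolding words_def by auto
  ultimately show "\<exists>a b w. C = [[a],[b],w] \<and> a<n \<and> b<n \<and> a\<noteq>b \<and>
     set w \<subseteq> {0..<n} \<and> length w = c \<and> \<not> set w \<subseteq> {a,b}" using C e2 by blast
next
  assume "\<exists>a b w. C = [[a],[b],w] \<and> a<n \<and> b<n \<and> a\<noteq>b \<and>
     set w \<subseteq> {0..<n} \<and> length w = c \<and> \<not> set w \<subseteq> {a,b}"
  then obtain a b w where h: "C = [[a],[b],w]" "a<n" "b<n" "a\<noteq>b"
     "set w \<subseteq> {0..<n}" "length w = c" "\<not> set w \<subseteq> {a,b}" by blast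
  show "C \<in> UD n [1,1,c]" unfolding UD_def words_def using h code_ok[OF h(4,7)] by (simp add: all3s)
qed

lemma prefix_char:
  assumes "w = x # w'"
  shows "is_prefix_code [[a],[b],w] \<longleftrightarrow> a \<noteq> b \<and> x \<noteq> a \<and> x \<noteq> b"
  unfolding is_prefix_code_def assms by (simp add: all3s) blast

lemma PR_char:
  assumes "c \<ge> 1"
  shows "C \<in> PR n [1,1,c] \<longleftrightarrow> (\<exists>a b w. C = [[a],[b],w] \<and> a<n \<and> b<n \<and> a\<noteq>b \<and>
     set w \<subseteq> {0..<n} \<and> length w = c \<and> hd w \<notin> {a,b})"
proof
  assume "C \<in> PR n [1,1,c]"
  hence u: "C \<in> UD n [1,1,c]" and p: "is_prefix_code C" unfolding PR_def by auto
  from u obtain a b w where h: "C = [[a],[b],w]" "a<n" "b<n" "a\<noteq>b"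
     "set w \<subseteq> {0..<n}" "length w = c" using UD_char[OF assms] by blast
  obtain x w' where w: "w = x # w'" using h(6) assms by (cases w) auto
  have "hd w \<notin> {a,b}" using prefix_char[OF w] p h(1) w by auto
  thus "\<exists>a b w. C = [[a],[b],w] \<and> a<n \<and> b<n \<and> a\<noteq>b \<and>
     set w \<subseteq> {0..<n} \<and> length w = c \<and> hd w \<notin> {a,b}" using h by blast
next
  assume "\<exists>a b w. C = [[a],[b],w] \<and> a<n \<and> b<n \<and> a\<noteq>b \<and>
     set w \<subseteq> {0..<n} \<and> length w = c \<and> hd w \<notin> {a,b}"
  then obtain a b w where h: "C = [[a],[b],w]" "a<n" "b<n" "a\<noteq>b"
     "set w \<subseteq> {0..<n}" "length w = c" "hd w \<notin> {a,b}" by blast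
  obtain x w' where w: "w = x # w'" using h(6) assms by (cases w) auto
  have "\<not> set w \<subseteq> {a,b}" using h(7) w by auto
  hence "C \<in> UD n [1,1,c]" using UD_char[OF assms] h by blast
  moreover have "is_prefix_code C" using prefix_char[OF w] h w by auto
  ultimately show "C \<in> PR n [1,1,c]" unfolding PR_def by simp
qed



definition Pairs :: "nat \<Rightarrow> (nat \<times> nat) set" where
  "Pairs n = {(a,b). a<n \<and> b<n \<and> a\<noteq>b}"

lemma fin_Pairs: "finite (Pairs n)"
  by (rule finite_subset[of _ "{0..<n}\<times>{0..<n}"]) (auto simp: Pairs_def)

lemma card_Pairs: "card (Pairs n) = n*n - n"
proof -
  have e: "Pairs n = {0..<n}\<times>{0..<n} - (\<lambda>a. (a,a)) ` {0..<n}" by (auto simp: Pairs_def)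
  have "card ((\<lambda>a. (a,a)) ` {0..<n}) = n" by (subst card_image) (auto simp: inj_on_def)
  moreover have "(\<lambda>a. (a,a)) ` {0..<n} \<subseteq> {0..<n}\<times>{0..<n}" by auto
  ultimately show ?thesis unfolding e
    by (subst card_Diff_subset) (auto simp: card_cartesian_product)
qed

lemma card_Wu:
  assumes "a<n" "b<n" "a\<noteq>b"
  shows "card {w. set w \<subseteq> {0..<n} \<and> length w = c \<and> \<not> set w \<subseteq> {a,b}} = n^c - 2^c"
proof -
  have e: "{w. set w \<subseteq> {0..<n} \<and> length w = c \<and> \<not> set w \<subseteq> {a,b}} =
     {w. set w \<subseteq> {0..<n} \<and> length w = c} - {w. set w \<subseteq> {a,b} \<and> length w = c}" by auto
  have s: "{w. set w \<subseteq> {a,b} \<and> length w = c} \<subseteq> {w. set w \<subseteq> {0..<n} \<and> length w = c}"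
    using assms by auto
  have "card {w. set w \<subseteq> {a,b} \<and> length w = c} = 2^c"
    using card_lists_length_eq[of "{a,b}" c] assms by (simp add: numeral_2_eq_2)
  moreover have "card {w. set w \<subseteq> {0..<n} \<and> length w = c} = n^c"
    using card_lists_length_eq[of "{0..<n}" c] by simp
  ultimately show ?thesis unfolding e
    by (subst card_Diff_subset[OF finite_lists_length_eq s]) auto
qed

lemma card_Wp:
  assumes "a<n" "b<n" "a\<noteq>b" "c = Suc c'"
  shows "card {w. set w \<subseteq> {0..<n} \<and> length w = c \<and> hd w \<notin> {a,b}} = (n-2)*n^c'"
proof -
  have e: "{w. set w \<subseteq> {0..<n} \<and> length w = c \<and> hd w \<notin> {a,b}} =
     (\<lambda>(x,v). x#v) ` (({0..<n}-{a,b}) \<times> {v. set v \<subseteq> {0..<n} \<and> length v = c'})"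
  proof (rule set_eqI, rule iffI)
    fix w assume "w \<in> {w. set w \<subseteq> {0..<n} \<and> length w = c \<and> hd w \<notin> {a,b}}"
    moreover then obtain x v where "w = x # v" using assms(4) by (cases w) auto
    ultimately show "w \<in> (\<lambda>(x,v). x#v) ` (({0..<n}-{a,b}) \<times> {v. set v \<subseteq> {0..<n} \<and> length v = c'})"
      using assms(4) by (auto simp: image_iff)
  next
    fix w assume "w \<in> (\<lambda>(x,v). x#v) ` (({0..<n}-{a,b}) \<times> {v. set v \<subseteq> {0..<n} \<and> length v = c'})"
    then show "w \<in> {w. set w \<subseteq> {0..<n} \<and> length w = c \<and> hd w \<notin> {a,b}}"
      using assms(4) by auto
  qed
  have "card ({0..<n}-{a,b}) = n - 2" using assms by (subst card_Diff_subset) auto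
  moreover have "card {v. set v \<subseteq> {0..<n} \<and> length v = c'} = n^c'"
    using card_lists_length_eq[of "{0..<n}" c'] by simp
  ultimately show ?thesis unfolding e
    by (subst card_image) (auto simp: inj_on_def card_cartesian_product)
qed

lemma injF: "inj_on (\<lambda>(p,w). [[fst p],[snd p],w::nat list]) X"
  by (auto simp: inj_on_def)

lemma card_UD:
  assumes "c \<ge> 1"
  shows "card (UD n [1,1,c]) = (n*n-n) * (n^c - 2^c)"
proof -
  have e: "UD n [1,1,c] = (\<lambda>(p,w). [[fst p],[snd p],w]) ` (SIGMA p:Pairs n. {w. set w \<subseteq> {0..<n} \<and> length w = c \<and> \<not> set w \<subseteq> {fst p, snd p}})"
  proof (rule set_eqI, rule iffI)
    fix C assume "C \<in> UD n [1,1,c]"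
    then obtain a b w where h: "C = [[a],[b],w]" "a<n" "b<n" "a\<noteq>b"
     "set w \<subseteq> {0..<n}" "length w = c" "\<not> set w \<subseteq> {a, b}" unfolding UD_char[OF assms] by blast
    have m: "((a,b),w) \<in> (SIGMA p:Pairs n. {w. set w \<subseteq> {0..<n} \<and> length w = c \<and> \<not> set w \<subseteq> {fst p, snd p}})" using h unfolding Pairs_def by simp
    have "C = (\<lambda>(p,w). [[fst p],[snd p],w]) ((a,b),w)" using h(1) by simp
    then show "C \<in> (\<lambda>(p,w). [[fst p],[snd p],w]) ` (SIGMA p:Pairs n. {w. set w \<subseteq> {0..<n} \<and> length w = c \<and> \<not> set w \<subseteq> {fst p, snd p}})"
      using m by (rule image_eqI)
  next
    fix C assume "C \<in> (\<lambda>(p,w). [[fst p],[snd p],w]) ` (SIGMA p:Pairs n. {w. set w \<subseteq> {0..<n} \<and> length w = c \<and> \<not> set w \<subseteq> {fst p, snd p}})"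
    then obtain q where q: "q \<in> (SIGMA p:Pairs n. {w. set w \<subseteq> {0..<n} \<and> length w = c \<and> \<not> set w \<subseteq> {fst p, snd p}})" "C = (\<lambda>(p,w). [[fst p],[snd p],w]) q" by (rule imageE)
    obtain a b w where qq: "q = ((a,b),w)" by (metis prod.collapse)
    have h: "C = [[a],[b],w]" "a<n" "b<n" "a\<noteq>b" "set w \<subseteq> {0..<n}" "length w = c" "\<not> set w \<subseteq> {a, b}"
      using q unfolding qq Pairs_def by simp_all
    show "C \<in> UD n [1,1,c]"
      apply (subst UD_char[OF assms])
      apply (rule exI[of _ a], rule exI[of _ b], rule exI[of _ w])
      using h by simp
  qed
  have "card (SIGMA p:Pairs n. {w. set w \<subseteq> {0..<n} \<and> length w = c \<and> \<not> set w \<subseteq> {fst p, snd p}})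
     = (\<Sum>p\<in>Pairs n. n^c - 2^c)"
    proof -
    have fin: "\<forall>p\<in>Pairs n. finite {w. set w \<subseteq> {0..<n} \<and> length w = c \<and> \<not> set w \<subseteq> {fst p, snd p}}"
      by (intro ballI finite_subset[OF _ finite_lists_length_eq[of "{0..<n}" c]]) auto
    have cs: "\<And>p. p \<in> Pairs n \<Longrightarrow> card {w. set w \<subseteq> {0..<n} \<and> length w = c \<and> \<not> set w \<subseteq> {fst p, snd p}} = n^c - 2^c"
      unfolding Pairs_def by (auto simp: card_Wu)
    show ?thesis by (simp only: card_SigmaI[OF fin_Pairs fin]) (rule sum.cong[OF refl cs])
  qed
  thus ?thesis unfolding e by (simp add: card_image[OF injF] card_Pairs)
qed

lemma card_PR:
  assumes "c = Suc c'"
  shows "card (PR n [1,1,c]) = (n*n-n) * ((n-2)*n^c')"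
proof -
  have c: "c \<ge> 1" using assms by simp
  have e: "PR n [1,1,c] = (\<lambda>(p,w). [[fst p],[snd p],w]) ` (SIGMA p:Pairs n. {w. set w \<subseteq> {0..<n} \<and> length w = c \<and> hd w \<notin> {fst p, snd p}})"
  proof (rule set_eqI, rule iffI)
    fix C assume "C \<in> PR n [1,1,c]"
    then obtain a b w where h: "C = [[a],[b],w]" "a<n" "b<n" "a\<noteq>b"
     "set w \<subseteq> {0..<n}" "length w = c" "hd w \<notin> {a, b}" unfolding PR_char[OF c] by blast
    have m: "((a,b),w) \<in> (SIGMA p:Pairs n. {w. set w \<subseteq> {0..<n} \<and> length w = c \<and> hd w \<notin> {fst p, snd p}})" using h unfolding Pairs_def by simp
    have "C = (\<lambda>(p,w). [[fst p],[snd p],w]) ((a,b),w)" using h(1) by simp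
    then show "C \<in> (\<lambda>(p,w). [[fst p],[snd p],w]) ` (SIGMA p:Pairs n. {w. set w \<subseteq> {0..<n} \<and> length w = c \<and> hd w \<notin> {fst p, snd p}})"
      using m by (rule image_eqI)
  next
    fix C assume "C \<in> (\<lambda>(p,w). [[fst p],[snd p],w]) ` (SIGMA p:Pairs n. {w. set w \<subseteq> {0..<n} \<and> length w = c \<and> hd w \<notin> {fst p, snd p}})"
    then obtain q where q: "q \<in> (SIGMA p:Pairs n. {w. set w \<subseteq> {0..<n} \<and> length w = c \<and> hd w \<notin> {fst p, snd p}})" "C = (\<lambda>(p,w). [[fst p],[snd p],w]) q" by (rule imageE)
    obtain a b w where qq: "q = ((a,b),w)" by (metis prod.collapse)
    have h: "C = [[a],[b],w]" "a<n" "b<n" "a\<noteq>b" "set w \<subseteq> {0..<n}" "length w = c" "hd w \<notin> {a, b}"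
      using q unfolding qq Pairs_def by simp_all
    show "C \<in> PR n [1,1,c]"
      apply (subst PR_char[OF c])
      apply (rule exI[of _ a], rule exI[of _ b], rule exI[of _ w])
      using h by simp
  qed
  have "card (SIGMA p:Pairs n. {w. set w \<subseteq> {0..<n} \<and> length w = c \<and> hd w \<notin> {fst p, snd p}})
     = (\<Sum>p\<in>Pairs n. (n-2)*n^c')"
    proof -
    have fin: "\<forall>p\<in>Pairs n. finite {w. set w \<subseteq> {0..<n} \<and> length w = c \<and> hd w \<notin> {fst p, snd p}}"
      by (intro ballI finite_subset[OF _ finite_lists_length_eq[of "{0..<n}" c]]) auto
    have cs: "\<And>p. p \<in> Pairs n \<Longrightarrow> card {w. set w \<subseteq> {0..<n} \<and> length w = c \<and> hd w \<notin> {fst p, snd p}} = (n-2)*n^c'"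
      unfolding Pairs_def using card_Wp[OF _ _ _ assms] by auto
    show ?thesis by (simp only: card_SigmaI[OF fin_Pairs fin]) (rule sum.cong[OF refl cs])
  qed
  thus ?thesis unfolding e by (simp add: card_image[OF injF] card_Pairs)
qed

lemma final_alg:
  fixes n c' :: nat
  assumes "n > 2"
  shows "real ((n*n-n) * ((n-2)*n^c')) / real ((n*n-n) * (n^Suc c' - 2^Suc c'))
     = (real n - 2) / real n * (1 / (1 - (2 / real n) ^ Suc c'))"
proof -
  have le: "(2::nat)^Suc c' < n^Suc c'" using assms by (intro power_strict_mono) auto
  have "n*1 < n*n" using assms by (intro mult_strict_left_mono) auto
  hence p: "n*n - n > 0" by simp
  have "real ((n*n-n) * ((n-2)*n^c')) / real ((n*n-n) * (n^Suc c' - 2^Suc c'))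
      = real ((n-2)*n^c') / real (n^Suc c' - 2^Suc c')" using p by simp
  also have "\<dots> = (real n - 2) * real n ^ c' / (real n ^ Suc c' - 2 ^ Suc c')"
    using le assms by (simp add: of_nat_diff)
  also have "\<dots> = (real n - 2) / real n * (1 / (1 - (2 / real n) ^ Suc c'))"
  proof -
    have n0: "real n > 0" using assms by simp
    have d: "real n ^ Suc c' - 2 ^ Suc c' > 0" using le
      by (metis of_nat_less_iff of_nat_numeral of_nat_power diff_gt_0_iff_gt)
    have "1 - (2 / real n) ^ Suc c' = (real n ^ Suc c' - 2 ^ Suc c') / real n ^ Suc c'"
      using n0 by (simp add: power_divide field_simps)
    thus ?thesis using n0 d by (simp add: field_simps)
  qed
  finally show ?thesis .
qed

theorem mainTheorem8:
  fixes n c :: nat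
  assumes "n > 2" and "c \<ge> 1"
  shows "rho n [1, 1, c] = (real n - 2) / real n * (1 / (1 - (2 / real n) ^ c))"
proof -
  obtain c' where c: "c = Suc c'" using assms(2) by (cases c) auto
  have "rho n [1,1,c] = real (card (PR n [1,1,c])) / real (card (UD n [1,1,c]))"
    by (simp only: rho_def)
  also have "\<dots> = real ((n*n-n) * ((n-2)*n^c')) / real ((n*n-n) * (n^Suc c' - 2^Suc c'))"
    apply (subst card_UD[OF assms(2)]) apply (subst card_PR[OF c]) by (simp only: c)
  also have "\<dots> = (real n - 2) / real n * (1 / (1 - (2 / real n) ^ c))"
    unfolding c by (rule final_alg[OF assms(1)])
  finally show ?thesis .
qed

end
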